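(* Let $[i_s,i_t]\in\mathcal P$ be a bin of the key partition on which the offline optimal sequence $u_{i_s},\dots,u_{i_t}$ is monotonic (non-decreasing or non-increasing). Then the predictions $x_t$ of FLH-OGD satisfy $$\sum_{t=i_s}^{i_t}(y_t-x_t)^2-(y_t-u_t)^2\le 31(B+G)^2\log n.$$
   Context: Squared loss game: $n\ge 3$, $B\ge 1$, $G\ge B$; for $t=1,\dots,n$ the learner predicts $x_t\in[-B,B]$, then the adversary reveals $y_t\in[-G,G]$. $[a,b]=\{a,\dots,b\}$. FLH-OGD: For each $j\in[n]$ a base learner $E^j$ is started at time $j$; it runs projected online gradient descent on $[-B,B]$ on the losses $x\mapsto (y_t-x)^2$, $t\ge j$: its first prediction $x^{(j)}_j$ is a fixed point of $[-B,B]$, and $x^{(j)}_{t+1}=\Pi\big(x^{(j)}_t-\tfrac{1}{2\tau}\cdot 2(x^{(j)}_t-y_t)\big)$ with $\tau=t-j+1$, $\Pi$ the projection onto $[-B,B]$. The FLH meta-algorithm with learning rate $\zeta$ keeps a probability vector $v_t=(v_t^{(1)},\dots,v_t^{(t)})$, $v_1=(1)$; it predicts $x_t=\sum_{j\le t}v_t^{(j)}x^{(j)}_t$; after $y_t$ is revealed it sets $\hat v^{(i)}_{t+1}=v_t^{(i)}e^{-\zeta(y_t-x_t^{(i)})^2}/\sum_{j\le t}v_t^{(j)}e^{-\zeta(y_t-x_t^{(j)})^2}$ for $i\le t$, then $v^{(t+1)}_{t+1}=1/(t+1)$ and $v^{(i)}_{t+1}=(1-\tfrac1{t+1})\hat v^{(i)}_{t+1}$.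 FLH-OGD uses $\zeta=1/(2(G+B)^2)$. Offline optimal: given $C_n>0$, $u_1,\dots,u_n$ is an optimal solution of: minimize $\frac12\sum_{t=1}^n(y_t-\tilde u_t)^2$ subject to $\sum_{t=2}^{n}|\tilde u_t-\tilde u_{t-1}|\le C_n$ and $-B\le\tilde u_t\le B$; with optimal dual variables $\lambda\ge0$ (TV constraint) and $\gamma^\pm_t\ge0$ (box constraints) satisfying the KKT conditions: there are $s_t\in[-1,1]$ with $s_t=\mathrm{sign}(u_{t+1}-u_t)$ whenever $u_{t+1}\ne u_t$, $s_0=s_n=0$, $u_t-y_t=\lambda(s_t-s_{t-1})+\gamma_t^--\gamma_t^+$, and complementary slackness $\lambda(\sum_{t=2}^n|u_t-u_{t-1}|-C_n)=0$, $\gamma_t^-(u_t+B)=0$, $\gamma_t^+(u_t-B)=0$. Key partition $\mathcal P$: $[n]$ is partitioned greedily into consecutive bins: the first bin starts at $i_s=1$; a bin starting at $i_s$ ends at the largest $i_t\in[i_s,n]$ such that $\sum_{j=i_s+1}^{i_t}|u_j-u_{j-1}|\le B/\sqrt{i_t-i_s+1}$; the next bin starts at $i_t+1$, until $n$ is covered. *)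

theory Defs
  imports Complex_Main
begin

definition proj_box :: "real \<Rightarrow> real \<Rightarrow> real" where
  "proj_box B x = max (- B) (min B x)"

text \<open>Base learner E^j (projected OGD started at time j with first prediction x0).
  ogd_step B x0 y j k is the prediction of E^j at time t = j + k.\<close>
fun ogd_step :: "real \<Rightarrow> real \<Rightarrow> (nat \<Rightarrow> real) \<Rightarrow> nat \<Rightarrow> nat \<Rightarrow> real" where
  "ogd_step B x0 y j 0 = x0"
| "ogd_step B x0 y j (Suc k) =
     (let x = ogd_step B x0 y j k; \<tau> = real (Suc k)
      in proj_box B (x - (1 / (2 * \<tau>)) * (2 * (x - y (j + k)))))"

text \<open>Prediction x_t^{(j)} of base learner E^j at time t (meaningful for t \<ge> j).\<close>
definition base_pred :: "real \<Rightarrow> real \<Rightarrow> (nat \<Rightarrow> real) \<Rightarrow> nat \<Rightarrow> nat \<Rightarrow> real" where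
  "base_pred B x0 y j t = ogd_step B x0 y j (t - j)"

text \<open>FLH weights v_t^{(i)}, i = 1..t (zero outside), for base predictions E j t.\<close>
fun flh_w :: "real \<Rightarrow> (nat \<Rightarrow> nat \<Rightarrow> real) \<Rightarrow> (nat \<Rightarrow> real) \<Rightarrow> nat \<Rightarrow> nat \<Rightarrow> real" where
  "flh_w \<zeta> E y 0 = (\<lambda>i. 0)"
| "flh_w \<zeta> E y (Suc 0) = (\<lambda>i. if i = 1 then 1 else 0)"
| "flh_w \<zeta> E y (Suc (Suc t)) =
     (let v = flh_w \<zeta> E y (Suc t);
          Z = (\<Sum>j = 1..Suc t. v j * exp (- \<zeta> * (y (Suc t) - E j (Suc t))\<^sup>2))
      in (\<lambda>i. if i = Suc (Suc t) then 1 / real (Suc (Suc t))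
              else if 1 \<le> i \<and> i \<le> Suc t
                then (1 - 1 / real (Suc (Suc t))) * (v i * exp (- \<zeta> * (y (Suc t) - E i (Suc t))\<^sup>2) / Z)
              else 0))"

definition flh_pred :: "real \<Rightarrow> (nat \<Rightarrow> nat \<Rightarrow> real) \<Rightarrow> (nat \<Rightarrow> real) \<Rightarrow> nat \<Rightarrow> real" where
  "flh_pred \<zeta> E y t = (\<Sum>j = 1..t. flh_w \<zeta> E y t j * E j t)"

definition flh_ogd_pred :: "real \<Rightarrow> real \<Rightarrow> real \<Rightarrow> (nat \<Rightarrow> real) \<Rightarrow> nat \<Rightarrow> real" where
  "flh_ogd_pred B G x0 y t = flh_pred (1 / (2 * (G + B)\<^sup>2)) (base_pred B x0 y) y t"

definition tv :: "(nat \<Rightarrow> real) \<Rightarrow> nat \<Rightarrow> nat \<Rightarrow> real" where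
  "tv u a b = (\<Sum>j = Suc a..b. \<bar>u j - u (j - 1)\<bar>)"

definition offline_feasible :: "nat \<Rightarrow> real \<Rightarrow> real \<Rightarrow> (nat \<Rightarrow> real) \<Rightarrow> bool" where
  "offline_feasible n B Cn w \<longleftrightarrow> tv w 1 n \<le> Cn \<and> (\<forall>t\<in>{1..n}. - B \<le> w t \<and> w t \<le> B)"

definition offline_obj :: "nat \<Rightarrow> (nat \<Rightarrow> real) \<Rightarrow> (nat \<Rightarrow> real) \<Rightarrow> real" where
  "offline_obj n y w = (1/2) * (\<Sum>t = 1..n. (y t - w t)\<^sup>2)"

definition offline_optimal :: "nat \<Rightarrow> real \<Rightarrow> real \<Rightarrow> (nat \<Rightarrow> real) \<Rightarrow> (nat \<Rightarrow> real) \<Rightarrow> bool" where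
  "offline_optimal n B Cn y u \<longleftrightarrow> offline_feasible n B Cn u \<and>
     (\<forall>w. offline_feasible n B Cn w \<longrightarrow> offline_obj n y u \<le> offline_obj n y w)"

text \<open>KKT conditions with dual variables \<lambda>, \<gamma>^-, \<gamma>^+ and subgradient signs s.\<close>
definition kkt_holds :: "nat \<Rightarrow> real \<Rightarrow> real \<Rightarrow> (nat \<Rightarrow> real) \<Rightarrow> (nat \<Rightarrow> real) \<Rightarrow> bool" where
  "kkt_holds n B Cn y u \<longleftrightarrow>
    (\<exists>(lam::real) (gm::nat \<Rightarrow> real) (gp::nat \<Rightarrow> real) (s::nat \<Rightarrow> real).
       lam \<ge> 0 \<and> (\<forall>t\<in>{1..n}. gm t \<ge> 0 \<and> gp t \<ge> 0) \<and>
       (\<forall>t\<in>{0..n}. - 1 \<le> s t \<and> s t \<le> 1) \<and> s 0 = 0 \<and> s n = 0 \<and>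
       (\<forall>t\<in>{1..<n}. u (t + 1) \<noteq> u t \<longrightarrow> s t = sgn (u (t + 1) - u t)) \<and>
       (\<forall>t\<in>{1..n}. u t - y t = lam * (s t - s (t - 1)) + gm t - gp t) \<and>
       lam * (tv u 1 n - Cn) = 0 \<and>
       (\<forall>t\<in>{1..n}. gm t * (u t + B) = 0 \<and> gp t * (u t - B) = 0))"

definition bin_end :: "nat \<Rightarrow> real \<Rightarrow> (nat \<Rightarrow> real) \<Rightarrow> nat \<Rightarrow> nat" where
  "bin_end n B u a = (GREATEST b. a \<le> b \<and> b \<le> n \<and> tv u a b \<le> B / sqrt (real (b - a + 1)))"

fun bin_start :: "nat \<Rightarrow> real \<Rightarrow> (nat \<Rightarrow> real) \<Rightarrow> nat \<Rightarrow> nat" where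
  "bin_start n B u 0 = 1"
| "bin_start n B u (Suc k) = bin_end n B u (bin_start n B u k) + 1"

definition key_partition :: "nat \<Rightarrow> real \<Rightarrow> (nat \<Rightarrow> real) \<Rightarrow> (nat \<times> nat) set" where
  "key_partition n B u =
     {(a, b). \<exists>k. a = bin_start n B u k \<and> a \<le> n \<and> b = bin_end n B u a}"

definition monotone_on_bin :: "(nat \<Rightarrow> real) \<Rightarrow> nat \<Rightarrow> nat \<Rightarrow> bool" where
  "monotone_on_bin u a b \<longleftrightarrow>
     (\<forall>t\<in>{a..<b}. u t \<le> u (t + 1)) \<or> (\<forall>t\<in>{a..<b}. u (t + 1) \<le> u t)"

end

theory Submission
  imports Defs "HOL-Analysis.Analysis"
begin


lemma exp_concave:
  fixes z y B :: real
  assumes z: "0 < z" and h: "\<And>x. x \<in> {-B..B} \<Longrightarrow> 2*z*(y-x)^2 \<le> 1"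
  shows "convex_on {-B..B} (\<lambda>x. - exp (- z * (y - x)^2))"
proof (rule f''_ge0_imp_convex)
  show "convex {-B..B}" by simp
  show "((\<lambda>x. - exp (- z * (y - x)^2)) has_real_derivative (- exp (- z * (y - x)^2) * (2*z*(y-x)))) (at x)" for x
    by (rule derivative_eq_intros refl | simp)+ (simp add: algebra_simps)
  show "((\<lambda>x. - exp (- z * (y - x)^2) * (2*z*(y-x))) has_real_derivative
        (2*z* exp (- z * (y - x)^2) * (1 - 2*z*(y-x)^2))) (at x)" for x
    by (rule derivative_eq_intros refl | simp)+ (simp add: algebra_simps power2_eq_square)
  show "x \<in> {-B..B} \<Longrightarrow> 0 \<le> 2*z* exp (- z * (y - x)^2) * (1 - 2*z*(y-x)^2)" for x
    using h[of x] z by simp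
qed

lemma jensen_exp:
  fixes z y B :: real and S :: "nat set" and a e :: "nat \<Rightarrow> real"
  assumes z: "0 < z" and h: "\<And>x. x \<in> {-B..B} \<Longrightarrow> 2*z*(y-x)^2 \<le> 1"
    and S: "finite S" "S \<noteq> {}" and a: "sum a S = 1" "\<And>i. i \<in> S \<Longrightarrow> a i \<ge> 0"
    and e: "\<And>i. i \<in> S \<Longrightarrow> e i \<in> {-B..B}"
  shows "(\<Sum>i\<in>S. a i * exp (- z * (y - e i)^2)) \<le> exp (- z * (y - (\<Sum>i\<in>S. a i * e i))^2)"
proof -
  have "- exp (- z * (y - (\<Sum>i\<in>S. a i *\<^sub>R e i))^2) \<le> (\<Sum>i\<in>S. a i * (- exp (- z * (y - e i)^2)))"
    by (rule convex_on_sum[OF S exp_concave[OF z h] a e])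
  then show ?thesis by (simp add: sum_negf)
qed


lemma flh_w_old: "1 \<le> i \<Longrightarrow> i \<le> Suc t \<Longrightarrow> flh_w zz E y (Suc (Suc t)) i =
   (1 - 1/real(Suc(Suc t))) * (flh_w zz E y (Suc t) i * exp (- zz * (y (Suc t) - E i (Suc t))^2) /
   (\<Sum>j = 1..Suc t. flh_w zz E y (Suc t) j * exp (- zz * (y (Suc t) - E j (Suc t))^2)))"
  by (simp add: Let_def)

lemma flh_w_new: "flh_w zz E y (Suc (Suc t)) (Suc (Suc t)) = 1/real(Suc(Suc t))"
  by (simp add: Let_def)

lemma flh_w_prop: "1 \<le> t \<Longrightarrow> (\<forall>i\<in>{1..t}. 0 < flh_w zz E y t i) \<and> sum (flh_w zz E y t) {1..t} = 1"
proof (induction t rule: nat_induct_at_least)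
  case base
  then show ?case by simp
next
  case (Suc m)
  then obtain t where m: "m = Suc t" by (cases m) auto
  define v where "v = flh_w zz E y (Suc t)"
  define e where "e j = exp (- zz * (y (Suc t) - E j (Suc t))^2)" for j
  define Z where "Z = (\<Sum>j = 1..Suc t. v j * e j)"
  have vpos: "\<forall>i\<in>{1..Suc t}. 0 < v i" and vs: "sum v {1..Suc t} = 1" using Suc.IH m v_def by auto
  have Zpos: "0 < Z" unfolding Z_def
    by (rule sum_pos) (use vpos e_def in auto)
  have old: "flh_w zz E y (Suc (Suc t)) i = (1 - 1/real(Suc(Suc t))) * (v i * e i / Z)" if "i \<in> {1..Suc t}" for i
    using flh_w_old[of i t zz E y] that unfolding v_def e_def Z_def by auto
  have pos: "\<forall>i\<in>{1..Suc (Suc t)}. 0 < flh_w zz E y (Suc (Suc t)) i"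
  proof
    fix i assume i: "i \<in> {1..Suc (Suc t)}"
    show "0 < flh_w zz E y (Suc (Suc t)) i"
    proof (cases "i = Suc (Suc t)")
      case True then show ?thesis by (simp only: flh_w_new) simp
    next
      case False
      then have "i \<in> {1..Suc t}" using i by auto
      then show ?thesis using old[of i] vpos Zpos e_def by (auto intro!: mult_pos_pos divide_pos_pos)
    qed
  qed
  define w2 where "w2 = flh_w zz E y (Suc (Suc t))"
  have "sum w2 {1..Suc (Suc t)} =
        sum w2 {1..Suc t} + 1/real(Suc(Suc t))"
    using flh_w_new[of zz E y t] unfolding w2_def[symmetric] by simp
  also have "sum w2 {1..Suc t} = (\<Sum>i=1..Suc t. (1 - 1/real(Suc(Suc t))) * (v i * e i / Z))"
    by (rule sum.cong) (simp_all add: old w2_def del: flh_w.simps)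
  also have "\<dots> = (1 - 1/real(Suc(Suc t))) * (Z / Z)"
    by (simp add: sum_distrib_left[symmetric] sum_divide_distrib[symmetric] Z_def)
  finally have "sum w2 {1..Suc (Suc t)} = 1" using Zpos by simp
  then show ?case using pos m w2_def by simp
qed

lemma flh_step:
  fixes zz B :: real
  assumes zz: "0 < zz" and t: "1 \<le> p" "p \<le> t"
    and h: "\<And>x. x \<in> {-B..B} \<Longrightarrow> 2*zz*(y t - x)^2 \<le> 1"
    and e: "\<And>j. j \<in> {1..t} \<Longrightarrow> E j t \<in> {-B..B}"
  shows "(y t - flh_pred zz E y t)^2 - (y t - E p t)^2 \<le>
     (1/zz) * ((ln (flh_w zz E y (Suc t) p) + ln (real (Suc t))) - (ln (flh_w zz E y t p) + ln (real t)))"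
proof -
  obtain t' where tt: "t = Suc t'" using t by (cases t) auto
  define v where "v = flh_w zz E y t"
  define e where "e j = exp (- zz * (y t - E j t)^2)" for j
  define Z where "Z = (\<Sum>j = 1..t. v j * e j)"
  have vpos: "\<forall>i\<in>{1..t}. 0 < v i" and vs: "sum v {1..t} = 1" using flh_w_prop[of t zz E y] t v_def by auto
  have Zpos: "0 < Z" unfolding Z_def
    by (rule sum_pos) (use vpos e_def t in auto)
  have old: "flh_w zz E y (Suc t) p = (real t / real (Suc t)) * (v p * e p / Z)"
    using flh_w_old[of p t' zz E y] t unfolding v_def e_def Z_def tt by (auto simp: field_simps)
  have J: "Z \<le> exp (- zz * (y t - flh_pred zz E y t)^2)"
    unfolding Z_def flh_pred_def v_def e_def
    by (rule jensen_exp[OF zz h]) (use t vs vpos e in \<open>auto simp: v_def less_imp_le\<close>)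
  have lnZ: "ln Z \<le> - zz * (y t - flh_pred zz E y t)^2"
    using J Zpos by (metis ln_exp ln_le_cancel_iff exp_gt_zero)
  have vp: "0 < v p" using vpos t by auto
  have ep: "ln (e p) = - zz * (y t - E p t)^2" by (simp add: e_def)
  have "ln (flh_w zz E y (Suc t) p) = ln (real t) - ln (real (Suc t)) + ln (v p) + ln (e p) - ln Z"
    using t vp Zpos by (simp add: old ln_mult ln_div e_def)
  then have "ln (flh_w zz E y (Suc t) p) + ln (real (Suc t)) - (ln (v p) + ln (real t)) = - zz * (y t - E p t)^2 - ln Z"
    using ep by simp
  then have "(1/zz) * ((ln (flh_w zz E y (Suc t) p) + ln (real (Suc t))) - (ln (v p) + ln (real t)))
     = -((y t - E p t)^2) - ln Z / zz" using zz by (simp add: field_simps)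
  moreover have "- ln Z / zz \<ge> (y t - flh_pred zz E y t)^2" using lnZ zz by (simp add: field_simps)
  ultimately show ?thesis unfolding v_def by linarith
qed


lemma flh_w_diag: "1 \<le> p \<Longrightarrow> flh_w zz E y p p * real p = 1"
proof -
  assume "1 \<le> p"
  then consider "p = 1" | k where "p = Suc (Suc k)" by (metis One_nat_def not0_implies_Suc not_one_le_zero Suc_eq_plus1 le_add2 le_less less_one old.nat.exhaust)
  then show ?thesis
  proof cases
    case 1 then show ?thesis by simp
  next
    case 2 then show ?thesis by (simp only: flh_w_new) simp
  qed
qed

lemma flh_interval:
  fixes zz B :: real
  assumes zz: "0 < zz" and pq: "1 \<le> p" "p \<le> q"
    and h: "\<And>t x. t \<in> {p..q} \<Longrightarrow> x \<in> {-B..B} \<Longrightarrow> 2*zz*(y t - x)^2 \<le> 1"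
    and e: "\<And>t j. t \<in> {p..q} \<Longrightarrow> j \<in> {1..t} \<Longrightarrow> E j t \<in> {-B..B}"
  shows "(\<Sum>t=p..q. (y t - flh_pred zz E y t)^2 - (y t - E p t)^2) \<le> (1/zz) * ln (real (Suc q))"
proof -
  define \<Phi> where "\<Phi> t = ln (flh_w zz E y t p) + ln (real t)" for t
  have "(\<Sum>t=p..q. (y t - flh_pred zz E y t)^2 - (y t - E p t)^2) \<le> (\<Sum>t=p..q. (1/zz) * (\<Phi> (Suc t) - \<Phi> t))"
    unfolding \<Phi>_def
    by (rule sum_mono, rule flh_step[OF zz]) (use pq h e in auto)
  also have "\<dots> = (1/zz) * (\<Phi> (Suc q) - \<Phi> p)"
  proof -
    have "p \<le> Suc q" using pq by simp
    then show ?thesis by (simp only: sum_distrib_left[symmetric] sum_Suc_diff)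
  qed
  finally have S: "(\<Sum>t=p..q. (y t - flh_pred zz E y t)^2 - (y t - E p t)^2) \<le> (1/zz) * (\<Phi> (Suc q) - \<Phi> p)" .
  have P0: "\<Phi> p = 0"
  proof -
    have d: "flh_w zz E y p p * real p = 1" using flh_w_diag pq by auto
    have "0 < flh_w zz E y p p" using flh_w_prop[of p zz E y] pq by auto
    moreover have "real p > 0" using pq by simp
    ultimately have "ln (flh_w zz E y p p * real p) = ln (flh_w zz E y p p) + ln (real p)" by (simp add: ln_mult)
    then show ?thesis unfolding \<Phi>_def using d by simp
  qed
  have P1: "\<Phi> (Suc q) \<le> ln (real (Suc q))"
  proof -
    have P: "(\<forall>i\<in>{1..Suc q}. 0 < flh_w zz E y (Suc q) i) \<and> sum (flh_w zz E y (Suc q)) {1..Suc q} = 1"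
      using flh_w_prop[of "Suc q" zz E y] by simp
    have "flh_w zz E y (Suc q) p \<le> sum (flh_w zz E y (Suc q)) {1..Suc q}"
      by (rule member_le_sum) (use P pq in \<open>auto intro: less_imp_le\<close>)
    then have le1: "flh_w zz E y (Suc q) p \<le> 1" using P by simp
    have "0 < flh_w zz E y (Suc q) p" using P pq by auto
    then have "ln (flh_w zz E y (Suc q) p) \<le> 0" using le1 by simp
    then show ?thesis unfolding \<Phi>_def by simp
  qed
  have "(1/zz) * (\<Phi> (Suc q) - \<Phi> p) \<le> (1/zz) * ln (real (Suc q))"
    using P0 P1 zz by (intro mult_left_mono) auto
  then show ?thesis using S by linarith
qed


lemma proj_box_bound: "0 \<le> B \<Longrightarrow> \<bar>proj_box B x\<bar> \<le> B"
  by (simp add: proj_box_def)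

lemma proj_box_nonexp: "\<bar>w\<bar> \<le> B \<Longrightarrow> \<bar>proj_box B x - w\<bar> \<le> \<bar>x - w\<bar>"
  unfolding proj_box_def by (cases "x \<le> -B"; cases "x \<ge> B") (simp_all add: abs_le_iff)

lemma ogd_bound_range: "0 \<le> B \<Longrightarrow> \<bar>x0\<bar> \<le> B \<Longrightarrow> \<bar>ogd_step B x0 y p k\<bar> \<le> B"
  by (cases k) (simp_all add: Let_def proj_box_bound)


lemma alg_aux: "k > 0 \<Longrightarrow> (k::real) * (d - g / k)^2 = k * d^2 - 2*d*g + g^2/k"
  by (simp add: power2_eq_square field_simps)

lemma ogd_bound:
  fixes B G x0 w :: real
  assumes B: "0 \<le> B" "\<bar>x0\<bar> \<le> B" and w: "\<bar>w\<bar> \<le> B"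
    and y: "\<And>k. k < K \<Longrightarrow> \<bar>y (p + k)\<bar> \<le> G"
  shows "(\<Sum>k<K. (y (p+k) - ogd_step B x0 y p k)^2 - (y (p+k) - w)^2) + real K * (ogd_step B x0 y p K - w)^2
         \<le> (G+B)^2 * (\<Sum>k<K. 1 / real (Suc k))"
  using y
proof (induction K)
  case 0 then show ?case by simp
next
  case (Suc K)
  define x where "x = ogd_step B x0 y p K"
  define yy where "yy = y (p + K)"
  define c where "c = x - (x - yy) / real (Suc K)"
  have nxt: "ogd_step B x0 y p (Suc K) = proj_box B c"
  proof -
    have "ogd_step B x0 y p (Suc K) = proj_box B (x - 1 / (2 * real (Suc K)) * (2 * (x - yy)))"
      unfolding x_def yy_def by (simp only: ogd_step.simps Let_def)
    moreover have "x - 1 / (2 * real (Suc K)) * (2 * (x - yy)) = c" unfolding c_def by (simp add: field_simps)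
    ultimately show ?thesis by simp
  qed
  have "\<bar>proj_box B c - w\<bar> \<le> \<bar>c - w\<bar>" by (rule proj_box_nonexp[OF w])
  then have pc: "(proj_box B c - w)^2 \<le> (c - w)^2"
    by (simp only: abs_le_square_iff)
  have xb: "\<bar>x\<bar> \<le> B" unfolding x_def by (rule ogd_bound_range[OF B])
  have yb: "\<bar>yy\<bar> \<le> G" unfolding yy_def using Suc.prems by auto
  have "\<bar>x - yy\<bar> \<le> G + B" using xb yb by linarith
  moreover have "G + B \<le> \<bar>G + B\<bar>" by simp
  ultimately have "\<bar>x - yy\<bar> \<le> \<bar>G + B\<bar>" by linarith
  then have gb: "(x - yy)^2 \<le> (G+B)^2"
    by (simp only: abs_le_square_iff)
  have alg: "(yy - x)^2 - (yy - w)^2 + real (Suc K) * (c - w)^2 - real K * (x - w)^2 = (x - yy)^2 / real (Suc K)"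
  proof -
    have k: "real (Suc K) > 0" by simp
    have e1: "real (Suc K) * (c - w)^2 = real (Suc K) * (x - w)^2 - 2*(x-w)*(x-yy) + (x-yy)^2 / real (Suc K)"
    proof -
      have "c - w = (x - w) - (x - yy) / real (Suc K)" unfolding c_def by simp
      then show ?thesis using alg_aux[OF k, of "x-w" "x-yy"] by (simp only: mult.assoc)
    qed
    have e2: "(yy - x)^2 - (yy - w)^2 = 2*(x-yy)*(x-w) - (x-w)^2" by (simp add: power2_eq_square algebra_simps)
    show ?thesis unfolding e1 e2 by (simp add: algebra_simps)
  qed
  have IH: "(\<Sum>k<K. (y (p+k) - ogd_step B x0 y p k)^2 - (y (p+k) - w)^2) + real K * (x - w)^2
         \<le> (G+B)^2 * (\<Sum>k<K. 1 / real (Suc k))" using Suc by (simp add: x_def)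
  have "(\<Sum>k<Suc K. (y (p+k) - ogd_step B x0 y p k)^2 - (y (p+k) - w)^2) + real (Suc K) * (ogd_step B x0 y p (Suc K) - w)^2
     \<le> (\<Sum>k<K. (y (p+k) - ogd_step B x0 y p k)^2 - (y (p+k) - w)^2) + ((yy - x)^2 - (yy - w)^2) + real (Suc K) * (c - w)^2"
  proof -
    have S: "(\<Sum>k<Suc K. (y (p+k) - ogd_step B x0 y p k)^2 - (y (p+k) - w)^2) =
      (\<Sum>k<K. (y (p+k) - ogd_step B x0 y p k)^2 - (y (p+k) - w)^2) + ((yy - x)^2 - (yy - w)^2)"
      unfolding x_def yy_def by (simp only: sum.lessThan_Suc)
    have "real (Suc K) * (ogd_step B x0 y p (Suc K) - w)^2 \<le> real (Suc K) * (c - w)^2"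
      unfolding nxt by (rule mult_left_mono[OF pc]) simp
    then show ?thesis unfolding S by linarith
  qed
  also have "\<dots> = (\<Sum>k<K. (y (p+k) - ogd_step B x0 y p k)^2 - (y (p+k) - w)^2) + real K * (x - w)^2 + (x - yy)^2 / real (Suc K)"
    using alg by linarith
  also have "\<dots> \<le> (G+B)^2 * (\<Sum>k<K. 1 / real (Suc k)) + (G+B)^2 / real (Suc K)"
    using IH gb by (simp add: divide_right_mono add_mono)
  also have "\<dots> = (G+B)^2 * (\<Sum>k<Suc K. 1 / real (Suc k))" by (simp add: algebra_simps)
  finally show ?case .
qed

lemma harm_bound: "(\<Sum>k<K. 1 / real (Suc k)) \<le> 1 + ln (real K)" if "1 \<le> K"
  using that
proof (induction K rule: nat_induct_at_least)
  case base then show ?case by simp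
next
  case (Suc m)
  have m: "0 < real m" using Suc by simp
  have "ln (real m / real (Suc m)) \<le> real m / real (Suc m) - 1"
    by (rule ln_le_minus_one) (use m in simp)
  also have "\<dots> = - 1 / real (Suc m)" by (simp add: field_simps)
  finally have "1 / real (Suc m) \<le> ln (real (Suc m)) - ln (real m)"
    using m by (simp add: ln_div)
  then show ?case using Suc by simp
qed


lemma sum_shift_aux: "(\<Sum>t=p..p+m. f t) = (\<Sum>k<Suc m. f (p+k))"
  by (induction m) (auto simp: add.commute)

lemma ln_facts:
  assumes n: "3 \<le> n"
  shows "1 \<le> ln (real n)" "ln (real (Suc n)) \<le> 2 * ln (real n)"
proof -
  have "exp 1 \<le> real n" using exp_le n by linarith
  then have "ln (exp 1) \<le> ln (real n)" using n by (subst ln_le_cancel_iff) auto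
  then show "1 \<le> ln (real n)" by simp
  have "3 * n \<le> n * n" using n by (rule mult_right_mono) simp
  then have "Suc n \<le> n * n" using n by linarith
  then have "real (Suc n) \<le> real n ^ 2" unfolding power2_eq_square by (metis of_nat_le_iff of_nat_mult)
  then have "ln (real (Suc n)) \<le> ln (real n ^ 2)" using n by simp
  then show "ln (real (Suc n)) \<le> 2 * ln (real n)" using n by (simp add: ln_realpow)
qed

lemma piece:
  fixes n :: nat and B G x0 w :: real and y :: "nat \<Rightarrow> real"
  assumes n: "n \<ge> 3" and B: "B \<ge> 1" and G: "G \<ge> B"
    and yb: "\<forall>t\<in>{1..n}. \<bar>y t\<bar> \<le> G" and x0: "\<bar>x0\<bar> \<le> B"
    and pq: "1 \<le> p" "q \<le> n" and w: "\<bar>w\<bar> \<le> B"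
  shows "(\<Sum>t=p..q. (y t - flh_ogd_pred B G x0 y t)^2 - (y t - w)^2) \<le> 6 * (B+G)^2 * ln (real n)"
proof (cases "p \<le> q")
  case False
  then have "(\<Sum>t=p..q. (y t - flh_ogd_pred B G x0 y t)^2 - (y t - w)^2) = 0" by simp
  moreover have "0 \<le> 6 * (B+G)^2 * ln (real n)" using ln_facts[OF n] by simp
  ultimately show ?thesis by linarith
next
  case True
  define zz where "zz = 1 / (2 * (G + B)^2)"
  define E where "E = base_pred B x0 y"
  have GB: "0 < G + B" using B G by linarith
  have zz: "0 < zz" unfolding zz_def using GB by simp
  have pred: "flh_ogd_pred B G x0 y t = flh_pred zz E y t" for t
    unfolding flh_ogd_pred_def zz_def E_def ..
  have Erange: "E j t \<in> {-B..B}" for j t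
    using ogd_bound_range[of B x0 y j "t - j"] B x0 unfolding E_def base_pred_def by auto
  have h: "2*zz*(y t - x)^2 \<le> 1" if "t \<in> {p..q}" "x \<in> {-B..B}" for t x
  proof -
    have "\<bar>y t\<bar> \<le> G" using yb that pq by auto
    then have "\<bar>y t - x\<bar> \<le> \<bar>G + B\<bar>" using that GB by auto
    then have "(y t - x)^2 \<le> (G+B)^2" by (simp only: abs_le_square_iff)
    then have "2*zz*(y t - x)^2 \<le> 2*zz*(G+B)^2" using zz by simp
    also have "\<dots> = 1" unfolding zz_def using GB by simp
    finally show ?thesis .
  qed
  have F: "(\<Sum>t=p..q. (y t - flh_pred zz E y t)^2 - (y t - E p t)^2) \<le> (1/zz) * ln (real (Suc q))"
    by (rule flh_interval[OF zz pq(1) True, where B=B]) (auto intro: h simp: Erange[simplified])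
  have "ln (real (Suc q)) \<le> ln (real (Suc n))" using pq by simp
  then have "ln (real (Suc q)) \<le> 2 * ln (real n)" using ln_facts[OF n] by linarith
  then have "(1/zz) * ln (real (Suc q)) \<le> (1/zz) * (2 * ln (real n))" using zz by (intro mult_left_mono) auto
  moreover have "1/zz = 2 * (B+G)^2" unfolding zz_def by (simp add: add.commute)
  ultimately have F2: "(\<Sum>t=p..q. (y t - flh_pred zz E y t)^2 - (y t - E p t)^2) \<le> 4 * (B+G)^2 * ln (real n)"
    using F by (simp add: algebra_simps)
  obtain m where m: "q = p + m" using True le_Suc_ex by blast
  have O1: "(\<Sum>k<Suc m. (y (p+k) - ogd_step B x0 y p k)^2 - (y (p+k) - w)^2) + real (Suc m) * (ogd_step B x0 y p (Suc m) - w)^2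
         \<le> (G+B)^2 * (\<Sum>k<Suc m. 1 / real (Suc k))"
    by (rule ogd_bound) (use B x0 w yb pq m in auto)
  have "(\<Sum>t=p..q. (y t - E p t)^2 - (y t - w)^2) = (\<Sum>k<Suc m. (y (p+k) - ogd_step B x0 y p k)^2 - (y (p+k) - w)^2)"
    unfolding m sum_shift_aux E_def base_pred_def by simp
  also have "\<dots> \<le> (G+B)^2 * (\<Sum>k<Suc m. 1 / real (Suc k))"
    using O1 by (smt (verit) mult_nonneg_nonneg of_nat_0_le_iff zero_le_power2)
  also have "\<dots> \<le> (G+B)^2 * (1 + ln (real (Suc m)))"
    by (rule mult_left_mono[OF harm_bound]) auto
  also have "\<dots> \<le> (G+B)^2 * (2 * ln (real n))"
  proof -
    have "ln (real (Suc m)) \<le> ln (real n)" using m pq by simp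
    then show ?thesis using ln_facts[OF n] by (intro mult_left_mono) auto
  qed
  finally have O2: "(\<Sum>t=p..q. (y t - E p t)^2 - (y t - w)^2) \<le> 2 * (B+G)^2 * ln (real n)"
    by (simp add: algebra_simps)
  have "(\<Sum>t=p..q. (y t - flh_ogd_pred B G x0 y t)^2 - (y t - w)^2) =
     (\<Sum>t=p..q. (y t - flh_pred zz E y t)^2 - (y t - E p t)^2) + (\<Sum>t=p..q. (y t - E p t)^2 - (y t - w)^2)"
    unfolding pred sum.distrib[symmetric] by simp
  then show ?thesis using F2 O2 by linarith
qed



lemma sum_split3: "a \<le> Suc m \<Longrightarrow> m \<le> b \<Longrightarrow> sum f {a..b} = sum f {a..m} + sum f {Suc m..b}"
  for f :: "nat \<Rightarrow> real"
proof -
  assume h: "a \<le> Suc m" "m \<le> b"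
  have "{a..b} = {a..m} \<union> {Suc m..b}" using h by auto
  moreover have "{a..m} \<inter> {Suc m..b} = {}" by auto
  ultimately show ?thesis by (simp add: sum.union_disjoint)
qed

lemma sbp:
  fixes v r :: "nat \<Rightarrow> real"
  assumes "r (p - 1) = 0" "1 \<le> p"
    and "\<And>t. p \<le> t \<Longrightarrow> t < p + m \<Longrightarrow> r t * (v (t+1) - v t) = 0"
  shows "(\<Sum>t=p..p+m. v t * (r t - r (t - 1))) = v (p+m) * r (p+m)"
  using assms(3)
proof (induction m)
  case 0 then show ?case using assms(1) by simp
next
  case (Suc m)
  have "(\<Sum>t=p..p+Suc m. v t * (r t - r (t - 1))) = v (p+m) * r (p+m) + v (p + Suc m) * (r (p + Suc m) - r (p+m))"
    using Suc by simp
  moreover have "r (p+m) * (v (p+m+1) - v (p+m)) = 0" using Suc.prems by simp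
  moreover have "v (p+m) * r (p+m) + v (p + Suc m) * (r (p + Suc m) - r (p+m)) =
     v (p + Suc m) * r (p + Suc m) - r (p+m) * (v (p+m+1) - v (p+m))" by (simp add: algebra_simps)
  ultimately show ?case by linarith
qed

lemma const_chain: "(\<forall>t\<in>{c..<d}. u (t+1) = (u t::real)) \<Longrightarrow> c \<le> t \<Longrightarrow> t \<le> d \<Longrightarrow> u t = u c"
  for t c d :: nat
proof (induction t)
  case 0 then show ?case by simp
next
  case (Suc t)
  then show ?case by (cases "c = Suc t") auto
qed

lemma mono_chain: "(\<forall>t\<in>{c..<d}. u t \<le> (u (t+1)::real)) \<Longrightarrow> c \<le> i \<Longrightarrow> i \<le> j \<Longrightarrow> j \<le> d \<Longrightarrow> u i \<le> u j"
  for i j c d :: nat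
proof (induction j)
  case 0 then show ?case by simp
next
  case (Suc j)
  show ?case
  proof (cases "i = Suc j")
    case True then show ?thesis by simp
  next
    case False
    then have "u i \<le> u j" using Suc by auto
    moreover have "u j \<le> u (Suc j)" using Suc False by auto
    ultimately show ?thesis by simp
  qed
qed

lemma tv_diff_aux: "i \<le> j \<Longrightarrow> \<bar>u j - u i\<bar> \<le> (\<Sum>k=Suc i..j. \<bar>u k - u (k - 1)\<bar>)"
  for u :: "nat \<Rightarrow> real"
proof (induction j)
  case 0 then show ?case by simp
next
  case (Suc j)
  show ?case
  proof (cases "i = Suc j")
    case True then show ?thesis by simp
  next
    case False
    then have ij: "i \<le> j" using Suc by auto
    then have "\<bar>u j - u i\<bar> \<le> (\<Sum>k=Suc i..j. \<bar>u k - u (k - 1)\<bar>)" using Suc by auto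
    moreover have "(\<Sum>k=Suc i..Suc j. \<bar>u k - u (k - 1)\<bar>) = (\<Sum>k=Suc i..j. \<bar>u k - u (k - 1)\<bar>) + \<bar>u (Suc j) - u j\<bar>"
      using ij by simp
    ultimately show ?thesis by linarith
  qed
qed

lemma tv_diff:
  assumes "a \<le> i" "i \<le> j" "j \<le> b"
  shows "\<bar>u j - u i\<bar> \<le> tv u a b"
proof -
  have "\<bar>u j - u i\<bar> \<le> (\<Sum>k=Suc i..j. \<bar>u k - u (k - 1)\<bar>)" by (rule tv_diff_aux[OF assms(2)])
  also have "\<dots> \<le> (\<Sum>k=Suc a..b. \<bar>u k - u (k - 1)\<bar>)"
    by (rule sum_mono2) (use assms in auto)
  finally show ?thesis unfolding tv_def .
qed



lemma mid_gap:
  fixes u y s :: "nat \<Rightarrow> real" and lam \<sigma> D :: real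
  assumes t: "1 \<le> t1" "t1 < t2"
    and Hs: "\<And>t. t \<in> {t1..t2} \<Longrightarrow> u (t+1) \<noteq> u t \<Longrightarrow> s t = \<sigma>"
    and Hs1: "s t1 = \<sigma>" and Hs2: "s t2 = \<sigma>"
    and Hk: "\<And>t. t \<in> {Suc t1..t2} \<Longrightarrow> u t - y t = lam * (s t - s (t - 1))"
    and Hd: "\<And>t. t \<in> {Suc t1..t2} \<Longrightarrow> (u t - u (Suc t1))^2 \<le> D"
  shows "(\<Sum>t=Suc t1..t2. (y t - u (Suc t1))^2 - (y t - u t)^2) \<le> real (t2 - t1) * D"
proof -
  define w where "w = u (Suc t1)"
  define v where "v t = u t - w" for t
  define r where "r t = s t - \<sigma>" for t
  define m where "m = t2 - Suc t1"
  have t2m: "t2 = Suc t1 + m" using t m_def by simp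
  have trm: "(y t - w)^2 - (y t - u t)^2 = (v t)^2 - 2 * lam * (v t * (r t - r (t - 1)))"
    if "t \<in> {Suc t1..t2}" for t
  proof -
    have "y t - u t = - (lam * (r t - r (t - 1)))" using Hk[OF that] unfolding r_def by simp
    moreover have "(y t - w)^2 - (y t - u t)^2 = (u t - w)^2 + 2 * (u t - w) * (y t - u t)"
      by (simp add: power2_eq_square algebra_simps)
    ultimately have "(y t - w)^2 - (y t - u t)^2 = (u t - w)^2 + 2 * (u t - w) * (- (lam * (r t - r (t - 1))))"
      by simp
    then show ?thesis unfolding v_def by (simp add: algebra_simps)
  qed
  have sb: "(\<Sum>t=Suc t1..Suc t1 + m. v t * (r t - r (t - 1))) = v (Suc t1 + m) * r (Suc t1 + m)"
  proof (rule sbp)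
    show "r (Suc t1 - 1) = 0" using Hs1 r_def by simp
    show "1 \<le> Suc t1" by simp
    fix t assume "Suc t1 \<le> t" "t < Suc t1 + m"
    then have "t \<in> {t1..t2}" using t2m by auto
    then show "r t * (v (t + 1) - v t) = 0" using Hs unfolding r_def v_def by (cases "u (t+1) = u t") auto
  qed
  also have "\<dots> = 0" using Hs2 t2m r_def by simp
  finally have sb0: "(\<Sum>t=Suc t1..t2. v t * (r t - r (t - 1))) = 0" using t2m by simp
  have "(\<Sum>t=Suc t1..t2. (y t - u (Suc t1))^2 - (y t - u t)^2) = (\<Sum>t=Suc t1..t2. (v t)^2 - 2 * lam * (v t * (r t - r (t - 1))))"
    using trm unfolding w_def by (intro sum.cong) auto
  also have "\<dots> = (\<Sum>t=Suc t1..t2. (v t)^2) - 2 * lam * (\<Sum>t=Suc t1..t2. v t * (r t - r (t - 1)))"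
    by (simp add: sum_subtractf sum_distrib_left)
  also have "\<dots> = (\<Sum>t=Suc t1..t2. (v t)^2)" using sb0 by simp
  also have "\<dots> \<le> (\<Sum>t=Suc t1..t2. D)" by (rule sum_mono) (use Hd v_def w_def in auto)
  also have "\<dots> = real (t2 - t1) * D" by simp
  finally show ?thesis .
qed



lemma bin_start_ge1: "1 \<le> bin_start n B u k"
  by (cases k) auto

lemma sum_const_u:
  fixes u :: "nat \<Rightarrow> real" and g :: "nat \<Rightarrow> real \<Rightarrow> real"
  assumes c: "\<forall>t\<in>{c..<d}. u (t+1) = u t"
  shows "(\<Sum>t=c..d. g t (u t)) = (\<Sum>t=c..d. g t (u c))"
proof (rule sum.cong)
  fix t assume "t \<in> {c..d}"
  then have "u t = u c" using const_chain[OF c, of t] by auto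
  then show "g t (u t) = g t (u c)" by simp
qed simp

theorem lemma4:
  fixes n :: nat and B G Cn x0 :: real and y u :: "nat \<Rightarrow> real" and i_s i_t :: nat
  assumes "n \<ge> 3" and "B \<ge> 1" and "G \<ge> B"
    and "\<forall>t\<in>{1..n}. \<bar>y t\<bar> \<le> G"
    and "\<bar>x0\<bar> \<le> B"
    and "Cn > 0"
    and "offline_optimal n B Cn y u"
    and "kkt_holds n B Cn y u"
    and "(i_s, i_t) \<in> key_partition n B u"
    and "monotone_on_bin u i_s i_t"
  shows "(\<Sum>t = i_s..i_t. (y t - flh_ogd_pred B G x0 y t)\<^sup>2 - (y t - u t)\<^sup>2)
           \<le> 31 * (B + G)\<^sup>2 * ln (real n)"
proof -
  note n = assms(1) and B = assms(2) and G = assms(3) and yb = assms(4) and x0 = assms(5)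
  define a where "a = i_s"
  define b where "b = i_t"
  define R where "R = 6 * (B+G)^2 * ln (real n)"
  define X where "X t = flh_ogd_pred B G x0 y t" for t
  have lnn: "1 \<le> ln (real n)" using ln_facts[OF n] by simp
  have Rnn: "0 \<le> (B+G)^2 * ln (real n)" using lnn by simp
  have R31: "3 * R + (B+G)^2 * ln (real n) \<le> 31 * (B + G)\<^sup>2 * ln (real n)" "R \<le> 31 * (B + G)\<^sup>2 * ln (real n)"
  proof -
    have e: "R = 6 * ((B+G)^2 * ln (real n))" "31 * (B + G)\<^sup>2 * ln (real n) = 31 * ((B+G)^2 * ln (real n))"
      unfolding R_def by simp_all
    show "3 * R + (B+G)^2 * ln (real n) \<le> 31 * (B + G)\<^sup>2 * ln (real n)" "R \<le> 31 * (B + G)\<^sup>2 * ln (real n)"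
      unfolding e using Rnn by linarith+
  qed
  obtain k where ks: "a = bin_start n B u k" "a \<le> n" "b = bin_end n B u a"
    using assms(9) unfolding key_partition_def a_def b_def by auto
  have a1: "1 \<le> a" using ks bin_start_ge1 by simp
  define P where "P c \<longleftrightarrow> a \<le> c \<and> c \<le> n \<and> tv u a c \<le> B / sqrt (real (c - a + 1))" for c
  have Pa: "P a" unfolding P_def tv_def using ks B by simp
  have "P (Greatest P)" by (rule GreatestI_nat[where P=P, OF Pa, of n]) (auto simp: P_def)
  moreover have "b = Greatest P" unfolding ks bin_end_def P_def ..
  ultimately have Pb: "P b" by simp
  then have ab: "a \<le> b" "b \<le> n" and tvb: "tv u a b \<le> B / sqrt (real (b - a + 1))" unfolding P_def by auto
  have ubox: "- B \<le> u t \<and> u t \<le> B" if "t \<in> {1..n}" for t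
    using assms(7) that unfolding offline_optimal_def offline_feasible_def by auto
  have uabs: "\<bar>u t\<bar> \<le> B" if "1 \<le> t" "t \<le> n" for t using ubox[of t] that by auto
  obtain lam gm gp s where
    kk: "lam \<ge> 0" "\<forall>t\<in>{1..n}. gm t \<ge> 0 \<and> gp t \<ge> 0"
      "\<forall>t\<in>{1..<n}. u (t + 1) \<noteq> u t \<longrightarrow> s t = sgn (u (t + 1) - u t)"
      "\<forall>t\<in>{1..n}. u t - y t = lam * (s t - s (t - 1)) + gm t - gp t"
      "\<forall>t\<in>{1..n}. gm t * (u t + B) = 0 \<and> gp t * (u t - B) = 0"
    using assms(8) unfolding kkt_holds_def by blast
  have piece': "(\<Sum>t=p..q. (y t - X t)^2 - (y t - w)^2) \<le> R" if "1 \<le> p" "q \<le> n" "\<bar>w\<bar> \<le> B" for p q w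
    unfolding X_def R_def using piece[OF n B G yb x0 that] by (simp add: add.commute)
  define J where "J = {t \<in> {a..<b}. u (Suc t) \<noteq> u t}"
  have finJ: "finite J" unfolding J_def by simp
  show ?thesis
  proof (cases "J = {}")
    case True
    then have c: "\<forall>t\<in>{a..<b}. u (t+1) = u t" unfolding J_def by auto
    have "(\<Sum>t=a..b. (y t - X t)^2 - (y t - u t)^2) = (\<Sum>t=a..b. (y t - X t)^2 - (y t - u a)^2)"
      by (rule sum_const_u[OF c])
    also have "\<dots> \<le> R" by (rule piece') (use a1 ab uabs ks in auto)
    also have "\<dots> \<le> 31 * (B + G)\<^sup>2 * ln (real n)" using R31 by simp
    finally show ?thesis unfolding a_def b_def X_def .
  next
    case False
    define t1 where "t1 = Min J"
    define t2 where "t2 = Max J"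
    have t1J: "t1 \<in> J" and t2J: "t2 \<in> J" unfolding t1_def t2_def using finJ False by auto
    have t12: "t1 \<le> t2" unfolding t1_def t2_def using finJ False by simp
    have t1a: "a \<le> t1" and t2b: "t2 < b" using t1J t2J unfolding J_def by auto
    have ch1: "u (Suc t1) \<noteq> u t1" and ch2: "u (Suc t2) \<noteq> u t2" using t1J t2J unfolding J_def by auto
    have c1: "\<forall>t\<in>{a..<t1}. u (t+1) = u t"
    proof
      fix t assume t: "t \<in> {a..<t1}"
      show "u (t+1) = u t"
      proof (rule ccontr)
        assume "u (t+1) \<noteq> u t"
        then have "t \<in> J" using t t12 t2b unfolding J_def by auto
        then have "t1 \<le> t" unfolding t1_def using finJ by simp
        then show False using t by simp
      qed
    qed
    have c3: "\<forall>t\<in>{Suc t2..<b}. u (t+1) = u t"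
    proof
      fix t assume t: "t \<in> {Suc t2..<b}"
      show "u (t+1) = u t"
      proof (rule ccontr)
        assume "u (t+1) \<noteq> u t"
        then have "t \<in> J" using t t1a t12 unfolding J_def by auto
        then have "t \<le> t2" unfolding t2_def using finJ by simp
        then show False using t by simp
      qed
    qed
    define L where "L t = (y t - X t)^2 - (y t - u t)^2" for t
    have split: "sum L {a..b} = sum L {a..t1} + sum L {Suc t1..t2} + sum L {Suc t2..b}"
      using sum_split3[of a t1 b L] sum_split3[of "Suc t1" t2 b L] t1a t12 t2b by simp
    have S1: "sum L {a..t1} \<le> R"
    proof -
      have "sum L {a..t1} = (\<Sum>t=a..t1. (y t - X t)^2 - (y t - u a)^2)"
        unfolding L_def by (rule sum_const_u[OF c1])
      also have "\<dots> \<le> R" by (rule piece'[OF a1]) (use ab t2b t12 uabs[of a] a1 ks in simp_all)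
      finally show ?thesis .
    qed
    have S3: "sum L {Suc t2..b} \<le> R"
    proof -
      have "sum L {Suc t2..b} = (\<Sum>t=Suc t2..b. (y t - X t)^2 - (y t - u (Suc t2))^2)"
        unfolding L_def by (rule sum_const_u[OF c3])
      also have "\<dots> \<le> R" by (rule piece') (use ab t2b t12 uabs[of "Suc t2"] in simp_all)
      finally show ?thesis .
    qed
    have mono: "\<exists>\<sigma>. (\<forall>t\<in>{a..<b}. u (t+1) \<noteq> u t \<longrightarrow> sgn (u (t+1) - u t) = \<sigma>) \<and>
                    (\<forall>t\<in>{Suc t1..t2}. - B < u t \<and> u t < B)"
    proof -
      have tb1: "-B \<le> u t1" "u (Suc t2) \<le> B" using ubox[of t1] ubox[of "Suc t2"] t1a a1 t2b ab t12 by auto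
      from assms(10) consider (inc) "\<forall>t\<in>{a..<b}. u t \<le> u (t + 1)" | (dec) "\<forall>t\<in>{a..<b}. u (t + 1) \<le> u t"
        unfolding monotone_on_bin_def a_def b_def by blast
      then show ?thesis
      proof cases
        case inc
        have "\<forall>t\<in>{a..<b}. u (t+1) \<noteq> u t \<longrightarrow> sgn (u (t+1) - u t) = 1"
          using inc by (auto simp: sgn_if)
        moreover have "\<forall>t\<in>{Suc t1..t2}. - B < u t \<and> u t < B"
        proof
          fix t assume t: "t \<in> {Suc t1..t2}"
          have "u t1 \<le> u (t1+1)" using inc t1a t12 t2b by simp
          then have "u t1 < u (Suc t1)" using ch1 by simp
          moreover have "u (Suc t1) \<le> u t" using mono_chain[OF inc, of "Suc t1" t] t t1a t2b by auto
          moreover have "u t \<le> u t2" using mono_chain[OF inc, of t t2] t t1a t2b by auto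
          moreover have "u t2 < u (Suc t2)"
          proof -
            have "u t2 \<le> u (t2+1)" using inc t1a t12 t2b by simp
            then show ?thesis using ch2 by simp
          qed
          ultimately show "- B < u t \<and> u t < B" using tb1 by linarith
        qed
        ultimately show ?thesis by blast
      next
        case dec
        have dec': "\<forall>t\<in>{a..<b}. (\<lambda>t. - u t) t \<le> (\<lambda>t. - u t) (t + 1)" using dec by auto
        have "\<forall>t\<in>{a..<b}. u (t+1) \<noteq> u t \<longrightarrow> sgn (u (t+1) - u t) = -1"
          using dec by (auto simp: sgn_if)
        moreover have "\<forall>t\<in>{Suc t1..t2}. - B < u t \<and> u t < B"
        proof
          fix t assume t: "t \<in> {Suc t1..t2}"
          have "u (t1+1) \<le> u t1" using dec t1a t12 t2b by simp
          then have "u t1 > u (Suc t1)" using ch1 by simp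
          moreover have "- u (Suc t1) \<le> - u t" using mono_chain[OF dec', of "Suc t1" t] t t1a t2b by auto
          moreover have "- u t \<le> - u t2" using mono_chain[OF dec', of t t2] t t1a t2b by auto
          moreover have "u t2 > u (Suc t2)"
          proof -
            have "u (t2+1) \<le> u t2" using dec t1a t12 t2b by simp
            then show ?thesis using ch2 by simp
          qed
          moreover have "u t1 \<le> B" "-B \<le> u (Suc t2)" using ubox[of t1] ubox[of "Suc t2"] t1a a1 t2b ab t12 by auto
          ultimately show "- B < u t \<and> u t < B" by linarith
        qed
        ultimately show ?thesis by blast
      qed
    qed
    then obtain \<sigma> where sg: "\<forall>t\<in>{a..<b}. u (t+1) \<noteq> u t \<longrightarrow> sgn (u (t+1) - u t) = \<sigma>"
      and inner: "\<forall>t\<in>{Suc t1..t2}. - B < u t \<and> u t < B" by blast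
    define D where "D = B^2 / real (b - a + 1)"
    have gap: "(\<Sum>t=Suc t1..t2. (y t - u (Suc t1))^2 - (y t - u t)^2) \<le> B^2"
    proof (cases "t1 < t2")
      case False
      then show ?thesis by simp
    next
      case True
      have Hs: "s t = \<sigma>" if "t \<in> {t1..t2}" "u (t+1) \<noteq> u t" for t
        using kk(3) sg that t1a a1 t2b ab by auto
      have Hk: "u t - y t = lam * (s t - s (t - 1))" if t: "t \<in> {Suc t1..t2}" for t
      proof -
        have tn: "t \<in> {1..n}" using t t2b ab by auto
        have "- B < u t \<and> u t < B" using inner t by blast
        then have "u t + B \<noteq> 0" "u t - B \<noteq> 0" by auto
        then have "gm t = 0" "gp t = 0" using kk(5) tn by auto
        then show ?thesis using kk(4) tn by auto
      qed
      have Hd: "(u t - u (Suc t1))^2 \<le> D" if t: "t \<in> {Suc t1..t2}" for t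
      proof -
        have "\<bar>u t - u (Suc t1)\<bar> \<le> tv u a b" by (rule tv_diff) (use t t1a t2b in auto)
        then have "\<bar>u t - u (Suc t1)\<bar> \<le> \<bar>B / sqrt (real (b - a + 1))\<bar>" using tvb by linarith
        then have "(u t - u (Suc t1))^2 \<le> (B / sqrt (real (b - a + 1)))^2" by (simp only: abs_le_square_iff)
        also have "\<dots> = D" unfolding D_def by (simp add: power_divide)
        finally show ?thesis .
      qed
      have "(\<Sum>t=Suc t1..t2. (y t - u (Suc t1))^2 - (y t - u t)^2) \<le> real (t2 - t1) * D"
        by (rule mid_gap[of t1 t2 u s \<sigma>]) (use a1 t1a True Hs ch1 ch2 Hk Hd t12 in auto)
      also have "\<dots> \<le> real (b - a + 1) * D"
        by (rule mult_right_mono) (use t1a t2b in \<open>auto simp: D_def\<close>)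
      also have "\<dots> = B^2" unfolding D_def by simp
      finally show ?thesis .
    qed
    have S2: "sum L {Suc t1..t2} \<le> R + B^2"
    proof -
      have "sum L {Suc t1..t2} = (\<Sum>t=Suc t1..t2. (y t - X t)^2 - (y t - u (Suc t1))^2)
           + (\<Sum>t=Suc t1..t2. (y t - u (Suc t1))^2 - (y t - u t)^2)"
        unfolding L_def sum.distrib[symmetric] by simp
      moreover have "(\<Sum>t=Suc t1..t2. (y t - X t)^2 - (y t - u (Suc t1))^2) \<le> R"
        by (rule piece') (use a1 ab uabs ks t2b t12 t1a in auto)
      ultimately show ?thesis using gap by linarith
    qed
    have "B^2 \<le> (B+G)^2" using B G by (intro power_mono) auto
    also have "\<dots> \<le> (B+G)^2 * ln (real n)" using mult_left_mono[OF lnn, of "(B+G)^2"] by simp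
    finally have "sum L {a..b} \<le> 3 * R + (B+G)^2 * ln (real n)" using split S1 S2 S3 by linarith
    also have "\<dots> \<le> 31 * (B + G)\<^sup>2 * ln (real n)" using R31 by simp
    finally show ?thesis unfolding L_def X_def a_def b_def .
  qed
qed


end
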